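(* Let $\mathrm{nF}(F)$ denote the number of reflective numerical semigroups with Frobenius number $F$. Then $\mathrm{nF}(F)=(1-\log 2)F+O(\sqrt{F})$ as $F\to\infty$ (with $\log$ the natural logarithm); in particular $\lim_{F\to\infty}\mathrm{nF}(F)/F=1-\log 2$.
   Context: A numerical semigroup is a submonoid $S$ of $(\mathbb{N}_0,+)$ with finite complement; its genus is the number of elements of $\mathbb{N}_0\setminus S$ and its Frobenius number is its largest gap. A numerical semigroup $S$ of genus $g\ge1$ is called reflective if for every $z\in\{0,1,\dots,g-1\}$ exactly one of $z$ and $z+g$ belongs to $S$. *)

theory Defs
  imports Complex_Main "HOL-Library.Landau_Symbols"
begin

definition numerical_semigroup :: "nat set \<Rightarrow> bool" where
  "numerical_semigroup S \<longleftrightarrow> 0 \<in> S \<and> (\<forall>x\<in>S. \<forall>y\<in>S. x + y \<in> S) \<and> finite (UNIV - S)"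

definition genus :: "nat set \<Rightarrow> nat" where
  "genus S = card (UNIV - S)"

definition frobenius :: "nat set \<Rightarrow> nat" where
  "frobenius S = Max (UNIV - S)"

definition reflective :: "nat set \<Rightarrow> bool" where
  "reflective S \<longleftrightarrow> numerical_semigroup S \<and> genus S \<ge> 1 \<and>
     (\<forall>z < genus S. (z \<in> S) \<noteq> (z + genus S \<in> S))"

definition nF :: "nat \<Rightarrow> nat" where
  "nF F = card {S. reflective S \<and> frobenius S = F}"

end

theory Submission
  imports Defs "HOL-Analysis.Harmonic_Numbers"
begin


definition R :: "nat \<Rightarrow> nat \<Rightarrow> nat set" where
  "R g d = {x. (x < g \<and> d dvd x) \<or> (g \<le> x \<and> x < 2*g \<and> \<not> d dvd (x - g)) \<or> 2*g \<le> x}"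

lemma R_gaps: "UNIV - R g d = {x. x < g \<and> \<not> d dvd x} \<union> {x. g \<le> x \<and> x < 2*g \<and> d dvd (x-g)}"
  by (auto simp: R_def)

lemma R_ns:
  assumes g: "1 \<le> g" and c: "d = g \<or> \<not> d dvd g"
  shows "numerical_semigroup (R g d)"
  unfolding numerical_semigroup_def
proof (intro conjI ballI)
  show "0 \<in> R g d" using g by (auto simp: R_def)
  show "finite (UNIV - R g d)" unfolding R_gaps by auto
  fix x y assume x: "x \<in> R g d" and y: "y \<in> R g d"
  consider "x < g" "d dvd x" | "g \<le> x" "x < 2*g" "\<not> d dvd (x - g)" | "2*g \<le> x"
    using x by (auto simp: R_def)
  then show "x + y \<in> R g d"
  proof cases
    case 1
    consider "y < g" "d dvd y" | "g \<le> y" "y < 2*g" "\<not> d dvd (y - g)" | "2*g \<le> y"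
      using y by (auto simp: R_def)
    then show ?thesis
    proof cases
      case a: 1
      show ?thesis
      proof (cases "x + y < g")
        case True then show ?thesis using 1 a by (auto simp: R_def)
      next
        case False
        have "\<not> d dvd (x + y - g)"
        proof
          assume h: "d dvd (x + y - g)"
          have "d dvd x + y" using 1 a by simp
          moreover have "g = (x + y) - (x + y - g)" using False by simp
          ultimately have "d dvd g" using h by (metis dvd_diff_nat)
          then have "d = g" using c by auto
          then have "x = 0" "y = 0" using 1 a by (auto dest: dvd_imp_le)
          then show False using False g by simp
        qed
        then show ?thesis using False 1 a by (auto simp: R_def)
      qed
    next
      case a: 2
      have "\<not> d dvd (x + y - g)"
      proof
        assume h: "d dvd (x + y - g)"
        have "x + y - g = x + (y - g)" using a by simp
        then have "d dvd x + (y - g)" using h by simp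
        then show False using 1 a by (metis dvd_add_right_iff)
      qed
      then show ?thesis using 1 a by (auto simp: R_def)
    next
      case 3 then show ?thesis by (auto simp: R_def)
    qed
  next
    case 2
    consider "y < g" "d dvd y" | "g \<le> y"
      using y by (auto simp: R_def)
    then show ?thesis
    proof cases
      case a: 1
      have "\<not> d dvd (x + y - g)"
      proof
        assume h: "d dvd (x + y - g)"
        have "x + y - g = y + (x - g)" using 2 by simp
        then have "d dvd y + (x - g)" using h by simp
        then show False using 2 a by (metis dvd_add_right_iff)
      qed
      then show ?thesis using 2 a by (auto simp: R_def)
    next
      case 2 then show ?thesis using \<open>g \<le> x\<close> by (auto simp: R_def)
    qed
  next
    case 3 then show ?thesis by (auto simp: R_def)
  qed
qed

lemma R_genus:
  assumes g: "1 \<le> g"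
  shows "genus (R g d) = g"
proof -
  let ?A = "{x. x < g \<and> \<not> d dvd x}" and ?B = "{z. z < g \<and> d dvd z}"
  have e: "{x. g \<le> x \<and> x < 2*g \<and> d dvd (x-g)} = (\<lambda>z. z + g) ` ?B"
  proof (rule set_eqI, rule iffI)
    fix x assume "x \<in> {x. g \<le> x \<and> x < 2*g \<and> d dvd (x-g)}"
    then show "x \<in> (\<lambda>z. z + g) ` ?B" by (intro image_eqI[of _ _ "x - g"]) auto
  qed auto
  have "card (UNIV - R g d) = card ?A + card ((\<lambda>z. z + g) ` ?B)"
    unfolding R_gaps e by (rule card_Un_disjoint) auto
  also have "card ((\<lambda>z. z + g) ` ?B) = card ?B" by (rule card_image) (auto simp: inj_on_def)
  also have "card ?A + card ?B = card (?A \<union> ?B)" by (rule card_Un_disjoint[symmetric]) auto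
  also have "?A \<union> ?B = {..<g}" by auto
  finally show ?thesis by (simp add: genus_def)
qed

lemma R_refl:
  assumes g: "1 \<le> g" and c: "d = g \<or> \<not> d dvd g"
  shows "reflective (R g d)"
  unfolding reflective_def R_genus[OF g] using R_ns[OF g c] g
  by (auto simp: R_def)

lemma dvd_le_div_mult: "(d::nat) dvd y \<Longrightarrow> y \<le> n \<Longrightarrow> y \<le> n div d * d"
  by (metis div_le_mono dvd_div_mult_self mult_le_mono1)

lemma R_frob:
  assumes g: "1 \<le> g" and d: "1 \<le> d"
  shows "frobenius (R g d) = g + (g - 1) div d * d"
  unfolding frobenius_def
proof (rule Max_eqI)
  show "finite (UNIV - R g d)" unfolding R_gaps by auto
  have "(g - 1) div d * d \<le> g - 1" by simp
  then have "(g - 1) div d * d < g" using g by arith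
  then show "g + (g - 1) div d * d \<in> UNIV - R g d" using g unfolding R_gaps by auto
  fix y assume "y \<in> UNIV - R g d"
  then consider "y < g" | "g \<le> y" "y < 2*g" "d dvd (y-g)" unfolding R_gaps by auto
  then show "y \<le> g + (g - 1) div d * d"
  proof cases
    case 2
    then have "y - g \<le> (g-1) div d * d" by (intro dvd_le_div_mult) auto
    then show ?thesis using 2 by simp
  qed simp
qed

lemma R_big: "g \<le> d \<Longrightarrow> R g d = R g g"
proof -
  assume gd: "g \<le> d"
  have *: "x < g \<Longrightarrow> (d dvd x \<longleftrightarrow> g dvd x)" for x
  proof -
    assume "x < g"
    then have "d dvd x \<longleftrightarrow> x = 0" "g dvd x \<longleftrightarrow> x = 0" using gd
      by (auto dest: dvd_imp_le)
    then show ?thesis by simp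
  qed
  show ?thesis unfolding R_def
  proof (rule Collect_cong)
    fix x
    show "(x < g \<and> d dvd x \<or> g \<le> x \<and> x < 2 * g \<and> \<not> d dvd x - g \<or> 2 * g \<le> x) =
          (x < g \<and> g dvd x \<or> g \<le> x \<and> x < 2 * g \<and> \<not> g dvd x - g \<or> 2 * g \<le> x)"
    proof -
      have "x < 2*g \<Longrightarrow> g \<le> x \<Longrightarrow> x - g < g" by arith
      then show ?thesis using *[of x] *[of "x - g"] by auto
    qed
  qed
qed

lemma refl_char:
  assumes r: "reflective S"
  obtains m where "S = R (genus S) m" "1 \<le> m" "m = genus S \<or> (m < genus S \<and> \<not> m dvd genus S)"
proof -
  define g where "g = genus S"
  have ns: "numerical_semigroup S" and g1: "1 \<le> g" and c: "\<And>z. z < g \<Longrightarrow> (z \<in> S) \<noteq> (z + g \<in> S)"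
    using r unfolding reflective_def g_def by auto
  have S0: "0 \<in> S" and add: "\<And>x y. x \<in> S \<Longrightarrow> y \<in> S \<Longrightarrow> x + y \<in> S" and fin: "finite (UNIV - S)"
    using ns unfolding numerical_semigroup_def by auto
  have cardG: "card (UNIV - S) = g" unfolding g_def genus_def ..
  let ?G2 = "(UNIV - S) \<inter> {..<2*g}"
  let ?A = "{z. z < g \<and> z \<notin> S}" and ?B = "{z. z < g \<and> z \<in> S}"
  have G2: "?G2 = ?A \<union> (\<lambda>z. z + g) ` ?B"
  proof (rule set_eqI, rule iffI)
    fix x assume x: "x \<in> ?G2"
    show "x \<in> ?A \<union> (\<lambda>z. z + g) ` ?B"
    proof (cases "x < g")
      case False
      then have "x - g < g" "x - g + g = x" using x by auto
      then have "x - g \<in> S" using c[of "x - g"] x by auto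
      then show ?thesis using \<open>x - g < g\<close> \<open>x - g + g = x\<close> by (auto intro!: image_eqI[of _ _ "x - g"])
    qed (use x in auto)
  next
    fix x assume "x \<in> ?A \<union> (\<lambda>z. z + g) ` ?B"
    then show "x \<in> ?G2" using c by auto
  qed
  have "card ?G2 = card ?A + card ((\<lambda>z. z + g) ` ?B)"
    unfolding G2 by (rule card_Un_disjoint) auto
  also have "card ((\<lambda>z. z + g) ` ?B) = card ?B" by (rule card_image) (auto simp: inj_on_def)
  also have "card ?A + card ?B = card (?A \<union> ?B)" by (rule card_Un_disjoint[symmetric]) auto
  also have "?A \<union> ?B = {..<g}" by auto
  finally have "card ?G2 = card (UNIV - S)" using cardG by simp
  then have G2eq: "?G2 = UNIV - S" by (rule card_subset_eq[OF fin Int_lower1])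
  have big: "x \<in> S" if "2*g \<le> x" for x
  proof (rule ccontr)
    assume "x \<notin> S"
    then have "x \<in> ?G2" unfolding G2eq by simp
    then show False using that by simp
  qed
  define m where "m = (LEAST x. 0 < x \<and> x \<in> S)"
  have "0 < 2*g \<and> 2*g \<in> S" using g1 big by auto
  then have mS: "0 < m \<and> m \<in> S" unfolding m_def by (rule LeastI)
  have mmin: "\<And>x. 0 < x \<Longrightarrow> x < m \<Longrightarrow> x \<notin> S" unfolding m_def using not_less_Least by blast
  have mult: "k * m \<in> S" for k by (induction k) (use S0 mS add in auto)
  have b: "x \<in> S \<longleftrightarrow> m dvd x" if "x < g" for x
  proof
    assume "m dvd x" then show "x \<in> S" using mult by (auto simp: mult.commute elim!: dvdE)
  next
    assume xS: "x \<in> S"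
    show "m dvd x"
    proof (rule ccontr)
      assume nd: "\<not> m dvd x"
      let ?r = "x mod m"
      have "0 < ?r" using nd by (simp add: dvd_eq_mod_eq_0)
      moreover have "?r < m" using mS by simp
      ultimately have "?r \<notin> S" using mmin by blast
      moreover have "?r < g" using that mod_less_eq_dividend[of x m] by linarith
      ultimately have "?r + g \<in> S" using c by blast
      then have "x div m * m + (?r + g) \<in> S" using mult add by blast
      then have "x + g \<in> S" by simp
      then show False using c[OF that] xS by simp
    qed
  qed
  have SR: "S = R g m"
  proof (rule set_eqI)
    fix x
    show "x \<in> S \<longleftrightarrow> x \<in> R g m"
    proof (cases "x < g")
      case True then show ?thesis using b[OF True] by (auto simp: R_def)
    next
      case False
      show ?thesis
      proof (cases "x < 2*g")
        case True
        then have "x - g < g" "x - g + g = x" using False by auto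
        then have "x \<in> S \<longleftrightarrow> \<not> m dvd (x - g)" using c[of "x - g"] b[of "x - g"] by auto
        then show ?thesis using False True by (auto simp: R_def)
      qed (use big in \<open>auto simp: R_def\<close>)
    qed
  qed
  show ?thesis
  proof (cases "g \<le> m")
    case True
    then have "S = R g g" using SR R_big[OF True] by simp
    then have "S = R (genus S) g" unfolding g_def .
    moreover have "1 \<le> g" by (rule g1)
    moreover have "g = genus S" unfolding g_def ..
    ultimately show ?thesis using that[of g] by blast
  next
    case False
    have "\<not> m dvd g"
    proof
      assume "m dvd g"
      then have "m dvd (g - m)" by (simp add: dvd_diff_nat)
      moreover have "g - m < g" using mS False by auto
      ultimately have "g - m \<in> S" using b by blast
      then have "g - m + m \<in> S" using add mS by blast
      then have "0 + g \<in> S" using False by simp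
      then show False using c[of 0] g1 S0 by simp
    qed
    have "S = R (genus S) m" using SR unfolding g_def .
    moreover have "1 \<le> m" using mS by simp
    moreover have "m < genus S" using False unfolding g_def by simp
    ultimately show ?thesis using that[of m] \<open>\<not> m dvd g\<close> unfolding g_def by blast
  qed
qed

definition D :: "nat \<Rightarrow> nat set" where
  "D F = {d. 2 \<le> d \<and> 2*d < F \<and> 1 \<le> F mod (2*d) \<and> F mod (2*d) < d}"

definition gF :: "nat \<Rightarrow> nat \<Rightarrow> nat" where
  "gF F d = F div (2*d) * d + F mod (2*d)"

lemma arith1:
  assumes "d \<in> D F"
  shows "d < gF F d" "\<not> d dvd gF F d" "gF F d + (gF F d - 1) div d * d = F" "gF F d < F"
proof -
  define q where "q = F div (2*d)"
  define r where "r = F mod (2*d)"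
  have d2: "2 \<le> d" and lt: "2*d < F" and r1: "1 \<le> r" and rd: "r < d"
    using assms unfolding D_def r_def by auto
  have F: "F = r + q*(2*d)" unfolding q_def r_def by (metis add.commute div_mult_mod_eq)
  have q1: "1 \<le> q"
  proof (rule ccontr)
    assume "\<not> 1 \<le> q" then have "q = 0" by simp
    then show False using F lt rd by simp
  qed
  have g: "gF F d = r + q * d" unfolding gF_def q_def[symmetric] r_def[symmetric] by simp
  have "d \<le> q * d" using q1 by simp
  then show "d < gF F d" using g r1 by linarith
  have "gF F d mod d = r" unfolding g using rd by simp
  then show "\<not> d dvd gF F d" using r1 by (simp add: dvd_eq_mod_eq_0)
  have "gF F d - 1 = (r - 1) + q * d" unfolding g using r1 by simp
  then have "(gF F d - 1) div d = (r - 1) div d + q" using d2 by simp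
  also have "(r - 1) div d = 0" using rd by simp
  finally have hq: "(gF F d - 1) div d = q" by simp
  have "r + q*d + q*d = r + q*(2*d)" by (simp add: algebra_simps)
  then show "gF F d + (gF F d - 1) div d * d = F" unfolding hq using g F by linarith
  have "0 < q * d" using q1 d2 by simp
  then show "gF F d < F" using g F \<open>r + q*d + q*d = r + q*(2*d)\<close> by linarith
qed

lemma arith2:
  assumes "1 \<le> m" "m < g" "\<not> m dvd g"
  shows "m \<in> D (g + (g - 1) div m * m)" "gF (g + (g - 1) div m * m) m = g"
proof -
  define q where "q = g div m"
  define r where "r = g mod m"
  have g: "g = r + q * m" unfolding q_def r_def by simp
  have r1: "1 \<le> r" using assms(3) unfolding r_def by (simp add: dvd_eq_mod_eq_0)
  have rm: "r < m" unfolding r_def using assms(1) by simp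
  have q1: "1 \<le> q"
  proof (rule ccontr)
    assume "\<not> 1 \<le> q" then have "q = 0" by simp
    then show False using g rm assms(2) by simp
  qed
  have "g - 1 = (r - 1) + q * m" using g r1 by simp
  then have "(g - 1) div m = (r - 1) div m + q" using assms(1) by simp
  also have "(r - 1) div m = 0" using rm by simp
  finally have e: "g + (g - 1) div m * m = r + q * (2*m)" unfolding g by (simp add: algebra_simps)
  have dv: "(r + q * (2*m)) div (2*m) = q" and md: "(r + q * (2*m)) mod (2*m) = r"
    using rm by auto
  have "2*m < r + q*(2*m)" using q1 r1 by (metis le_add2 le_eq_less_or_eq less_add_same_cancel2 less_le_trans mult_le_mono1 mult_1 zero_less_one) 
  then show "m \<in> D (g + (g - 1) div m * m)" unfolding e D_def using md r1 rm by auto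
  have "gF (r + q*(2*m)) m = r + q*m" unfolding gF_def dv md by simp
  then show "gF (g + (g - 1) div m * m) m = g" unfolding e using g by simp
qed

lemma D_fin: "finite (D F)"
  by (rule finite_subset[of _ "{..<F}"]) (auto simp: D_def)

lemma nF_eq:
  assumes F1: "1 \<le> F"
  shows "nF F = Suc (card (D F))"
proof -
  have set: "{S. reflective S \<and> frobenius S = F} = insert (R F F) ((\<lambda>d. R (gF F d) d) ` D F)"
  proof (rule set_eqI, rule iffI)
    fix S assume "S \<in> {S. reflective S \<and> frobenius S = F}"
    then have r: "reflective S" and fr: "frobenius S = F" by auto
    obtain m where SR: "S = R (genus S) m" and m1: "1 \<le> m"
      and mc: "m = genus S \<or> (m < genus S \<and> \<not> m dvd genus S)"
      using refl_char[OF r] by blast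
    have g1: "1 \<le> genus S" using r unfolding reflective_def by auto
    have fr2: "F = genus S + (genus S - 1) div m * m" using fr R_frob[OF g1 m1] SR by simp
    show "S \<in> insert (R F F) ((\<lambda>d. R (gF F d) d) ` D F)"
    proof (cases "m = genus S")
      case True
      then have "F = genus S" using fr2 g1 by simp
      then have "S = R F F" using SR True by simp
      then show ?thesis by simp
    next
      case False
      then have "m < genus S" "\<not> m dvd genus S" using mc by auto
      from arith2[OF m1 this] fr2 have "m \<in> D F" "gF F m = genus S" by auto
      then have "S = R (gF F m) m" using SR by simp
      then show ?thesis using \<open>m \<in> D F\<close> by blast
    qed
  next
    fix S assume "S \<in> insert (R F F) ((\<lambda>d. R (gF F d) d) ` D F)"
    then consider "S = R F F" | d where "d \<in> D F" "S = R (gF F d) d" by auto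
    then show "S \<in> {S. reflective S \<and> frobenius S = F}"
    proof cases
      case 1
      have "frobenius (R F F) = F" using R_frob[OF F1 F1] F1 by simp
      then show ?thesis using 1 R_refl[OF F1] by simp
    next
      case 2
      note a = arith1[OF 2(1)]
      have d1: "1 \<le> d" using 2(1) by (auto simp: D_def)
      have g1: "1 \<le> gF F d" using a(1) d1 by simp
      show ?thesis using R_refl[OF g1] R_frob[OF g1 d1] a 2(2) by simp
    qed
  qed
  have notin: "R F F \<notin> (\<lambda>d. R (gF F d) d) ` D F"
  proof
    assume "R F F \<in> (\<lambda>d. R (gF F d) d) ` D F"
    then obtain d where d: "d \<in> D F" "R F F = R (gF F d) d" by auto
    note a = arith1[OF d(1)]
    have "1 \<le> gF F d" using a(1) by simp
    then have "genus (R F F) = gF F d" using d(2) R_genus by simp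
    then show False using R_genus[OF F1] a(4) by simp
  qed
  have key: "d1 \<le> d2" if "d1 \<in> D F" "d2 \<in> D F" "R (gF F d1) d1 = R (gF F d2) d2" for d1 d2
  proof (rule ccontr)
    assume "\<not> d1 \<le> d2"
    then have lt: "d2 < d1" by simp
    have "d2 \<in> R (gF F d2) d2" using arith1(1)[OF that(2)] by (simp add: R_def)
    then have "d2 \<in> R (gF F d1) d1" using that(3) by simp
    moreover have "d2 < gF F d1" using arith1(1)[OF that(1)] lt by simp
    ultimately have "d1 dvd d2" by (simp add: R_def)
    moreover have "0 < d2" using that(2) by (simp add: D_def)
    ultimately show False using lt by (auto dest: dvd_imp_le)
  qed
  have inj: "inj_on (\<lambda>d. R (gF F d) d) (D F)"
  proof (rule inj_onI)
    fix x y assume "x \<in> D F" "y \<in> D F" "R (gF F x) x = R (gF F y) y"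
    then show "x = y" using key[of x y] key[of y x] by simp
  qed
  have "nF F = card (insert (R F F) ((\<lambda>d. R (gF F d) d) ` D F))" unfolding nF_def set ..
  also have "\<dots> = Suc (card ((\<lambda>d. R (gF F d) d) ` D F))"
    using notin D_fin by simp
  also have "card ((\<lambda>d. R (gF F d) d) ` D F) = card (D F)" using inj by (rule card_image)
  finally show ?thesis .
qed



lemma csum: "(\<Sum>k\<in>{1..K}. 1/(2*real k) - 1/(2*real k+1)) = 1 - (\<Sum>i<2*K+1. (-1)^i / real (Suc i))"
proof (induction K)
  case 0 then show ?case by simp
next
  case (Suc K)
  have e: "2 * Suc K + 1 = Suc (Suc (2*K+1))" by simp
  have t1: "(-1::real)^(2*K+1) / real (Suc (2*K+1)) = - (1/(2*real (Suc K)))"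
    by (simp add: power_add power_mult)
  have t2: "(-1::real)^(Suc (2*K+1)) / real (Suc (Suc (2*K+1))) = 1/(2*real (Suc K)+1)"
    by (simp add: power_add power_mult)
  have i: "{1..Suc K} = insert (Suc K) {1..K}" by auto
  have s1: "(\<Sum>k\<in>{1..Suc K}. 1/(2*real k) - 1/(2*real k+1)) =
     (1/(2*real (Suc K)) - 1/(2*real (Suc K)+1)) + (\<Sum>k\<in>{1..K}. 1/(2*real k) - 1/(2*real k+1))"
    unfolding i by (rule sum.insert) auto
  have s2: "(\<Sum>i<2 * Suc K + 1. (-1)^i / real (Suc i)) = (\<Sum>i<2*K+1. (-1)^i / real (Suc i))
      + (- (1/(2*real (Suc K)))) + 1/(2*real (Suc K)+1)"
    unfolding e sum.lessThan_Suc t1 t2 ..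
  show ?case unfolding s1 s2 using Suc.IH by linarith
qed

lemma ln2_bounds:
  "(\<Sum>i<2*n+2. (-1)^i / real (Suc i)) \<le> ln 2" "ln 2 \<le> (\<Sum>i<2*n+1. (-1)^i / real (Suc i))"
proof -
  let ?a = "\<lambda>i. inverse (real (Suc i))"
  have a0: "?a \<longlonglongrightarrow> 0" by (rule LIMSEQ_inverse_real_of_nat)
  have ap: "\<And>n. 0 \<le> ?a n" by simp
  have am: "\<And>n. ?a (Suc n) \<le> ?a n" by (simp add: field_simps)
  note L = summable_Leibniz'[OF a0 ap am]
  have eq: "(\<lambda>i. (-1)^i * ?a i) = (\<lambda>i. (-1)^i / real (Suc i))" by (simp add: divide_inverse)
  have s: "(\<Sum>i. (-1)^i / real (Suc i)) = ln 2"
    using alternating_harmonic_series_sums by (rule sums_unique[symmetric])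
  show "(\<Sum>i<2*n+2. (-1)^i / real (Suc i)) \<le> ln 2"
    using L(2)[of "n+1"] unfolding eq s by (simp add: algebra_simps)
  show "ln 2 \<le> (\<Sum>i<2*n+1. (-1)^i / real (Suc i))"
    using L(4)[of n] unfolding eq s by simp
qed

lemma card_interval:
  fixes a b :: real
  assumes "0 \<le> a" "a \<le> b"
  shows "real (card {d::nat. a < real d \<and> real d < b}) \<le> b - a + 1"
    "b - a - 1 \<le> real (card {d::nat. a < real d \<and> real d < b})"
proof -
  define l where "l = nat \<lfloor>a\<rfloor> + 1"
  define u where "u = nat \<lceil>b\<rceil>"
  have fa: "0 \<le> \<lfloor>a\<rfloor>" using assms by simp
  have cb: "0 \<le> \<lceil>b\<rceil>" using assms by linarith
  have "{d::nat. a < real d \<and> real d < b} = {l..<u}"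
  proof (rule set_eqI)
    fix d :: nat
    have 1: "a < real d \<longleftrightarrow> \<lfloor>a\<rfloor> < int d" by (simp add: floor_less_iff)
    have 2: "real d < b \<longleftrightarrow> int d < \<lceil>b\<rceil>" by (simp add: less_ceiling_iff)
    have 3: "\<lfloor>a\<rfloor> < int d \<longleftrightarrow> l \<le> d" unfolding l_def using nat_less_iff[OF fa, of d] Suc_le_eq[of "nat \<lfloor>a\<rfloor>" d] by simp
    have 4: "int d < \<lceil>b\<rceil> \<longleftrightarrow> d < u" unfolding u_def by (simp add: zless_nat_eq_int_zless)
    show "d \<in> {d::nat. a < real d \<and> real d < b} \<longleftrightarrow> d \<in> {l..<u}"
      unfolding mem_Collect_eq atLeastLessThan_iff 1 2 3 4 ..
  qed
  then have c: "card {d::nat. a < real d \<and> real d < b} = u - l" by simp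
  have ru: "b \<le> real u" "real u < b + 1" unfolding u_def using cb
    by (simp_all, linarith+)
  have rl: "a < real l" "real l \<le> a + 1" unfolding l_def using fa
    by (simp_all, linarith+)
  show "real (card {d::nat. a < real d \<and> real d < b}) \<le> b - a + 1"
    unfolding c using ru rl assms by (cases "l \<le> u") (simp_all add: of_nat_diff)
  show "b - a - 1 \<le> real (card {d::nat. a < real d \<and> real d < b})"
    unfolding c using ru rl assms by (cases "l \<le> u") (simp_all add: of_nat_diff)
qed



definition I :: "nat \<Rightarrow> nat \<Rightarrow> nat set" where
  "I F k = {d. 2*k*d < F \<and> F < (2*k+1)*d}"

lemma I_D: assumes k: "1 \<le> k" and d: "d \<in> I F k" shows "d \<in> D F" "F div (2*d) = k"
proof -
  have a: "2*k*d < F" "F < (2*k+1)*d" using d by (auto simp: I_def)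
  then have d0: "0 < d" by (cases d) auto
  define r where "r = F - 2*k*d"
  have F: "F = r + k*(2*d)" using a(1) unfolding r_def by simp
  have r1: "1 \<le> r" and rd: "r < d" using a unfolding r_def by (auto simp: algebra_simps)
  then have "r < 2*d" by simp
  then have dv: "F div (2*d) = k" and md: "F mod (2*d) = r" unfolding F by auto
  show "F div (2*d) = k" by (rule dv)
  have "2 \<le> d" using r1 rd by simp
  moreover have "2*d \<le> 2*k*d" using k by simp
  then have "2*d < F" using a(1) by linarith
  ultimately show "d \<in> D F" unfolding D_def using md r1 rd by auto
qed

lemma D_I: assumes d: "d \<in> D F" shows "d \<in> I F (F div (2*d))" "1 \<le> F div (2*d)"
proof -
  define q where "q = F div (2*d)"
  define r where "r = F mod (2*d)"
  have d2: "2 \<le> d" and lt: "2*d < F" and r1: "1 \<le> r" and rd: "r < d"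
    using assms unfolding D_def r_def by auto
  have F: "F = r + q*(2*d)" unfolding q_def r_def by (metis add.commute div_mult_mod_eq)
  show "1 \<le> F div (2*d)" unfolding q_def[symmetric]
  proof (rule ccontr)
    assume "\<not> 1 \<le> q" then have "q = 0" by simp
    then show False using F lt rd by simp
  qed
  have "2*q*d < F" "F < (2*q+1)*d" using F r1 rd by (auto simp: algebra_simps)
  then show "d \<in> I F (F div (2*d))" unfolding q_def[symmetric] I_def by simp
qed

lemma card_I:
  assumes k: "1 \<le> k"
  shows "\<bar>real (card (I F k)) - real F * (1/(2*real k) - 1/(2*real k+1))\<bar> \<le> 1"
proof -
  have e: "I F k = {d. real F/(2*real k+1) < real d \<and> real d < real F/(2*real k)}"
  proof (rule set_eqI)
    fix d
    have p1: "0 < 2*real k" "0 < 2*real k + 1" using k by auto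
    have 1: "2*k*d < F \<longleftrightarrow> real d < real F/(2*real k)"
    proof -
      have "real d < real F/(2*real k) \<longleftrightarrow> real d * (2*real k) < real F"
        using p1 by (simp add: pos_less_divide_eq)
      also have "real d * (2*real k) = real (2*k*d)" by simp
      finally show ?thesis by (simp only: of_nat_less_iff)
    qed
    have 2: "F < (2*k+1)*d \<longleftrightarrow> real F/(2*real k+1) < real d"
    proof -
      have "real F/(2*real k+1) < real d \<longleftrightarrow> real F < real d * (2*real k+1)"
        using p1 by (simp add: pos_divide_less_eq)
      also have "real d * (2*real k+1) = real ((2*k+1)*d)" by (simp add: algebra_simps)
      finally show ?thesis by (simp only: of_nat_less_iff)
    qed
    show "d \<in> I F k \<longleftrightarrow> d \<in> {d. real F/(2*real k+1) < real d \<and> real d < real F/(2*real k)}"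
      unfolding I_def mem_Collect_eq 1 2 by blast
  qed
  have le: "real F/(2*real k+1) \<le> real F/(2*real k)" using k by (intro divide_left_mono) auto
  have diff: "real F/(2*real k) - real F/(2*real k+1) = real F * (1/(2*real k) - 1/(2*real k+1))"
    by (simp add: field_simps)
  note c = card_interval[OF _ le]
  show ?thesis unfolding e using c diff by (simp add: abs_le_iff)
qed

lemma D_bound:
  assumes K: "1 \<le> K"
  shows "\<bar>real (card (D F)) - (1 - ln 2) * real F\<bar> \<le> real K + real F / (2*real K + 2)"
proof -
  define T where "T = {d \<in> D F. K < F div (2*d)}"
  have dec: "D F = (\<Union>k\<in>{1..K}. I F k) \<union> T"
  proof (rule set_eqI, rule iffI)
    fix d assume d: "d \<in> D F"
    show "d \<in> (\<Union>k\<in>{1..K}. I F k) \<union> T"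
    proof (cases "K < F div (2*d)")
      case True then show ?thesis using d unfolding T_def by auto
    next
      case False then show ?thesis using D_I[OF d] by auto
    qed
  next
    fix d assume "d \<in> (\<Union>k\<in>{1..K}. I F k) \<union> T"
    then show "d \<in> D F" unfolding T_def using I_D(1) by auto
  qed
  have finI: "finite (I F k)" if "1 \<le> k" for k
    using D_fin I_D(1)[OF that] by (meson finite_subset subsetI)
  have cardU: "card (\<Union>k\<in>{1..K}. I F k) = (\<Sum>k\<in>{1..K}. card (I F k))"
  proof (rule card_UN_disjoint)
    show "\<forall>i\<in>{1..K}. \<forall>j\<in>{1..K}. i \<noteq> j \<longrightarrow> I F i \<inter> I F j = {}"
    proof (intro ballI impI)
      fix i j assume ij: "i \<in> {1..K}" "j \<in> {1..K}" "i \<noteq> j"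
      show "I F i \<inter> I F j = {}"
      proof (rule ccontr)
        assume "I F i \<inter> I F j \<noteq> {}"
        then obtain x where "x \<in> I F i" "x \<in> I F j" by blast
        then have "F div (2*x) = i" "F div (2*x) = j" using I_D(2) ij by auto
        then show False using ij by simp
      qed
    qed
  qed (use finI in auto)
  have "card (D F) = card (\<Union>k\<in>{1..K}. I F k) + card T"
    unfolding dec by (rule card_Un_disjoint) (use finI D_fin I_D(2) in \<open>auto simp: T_def\<close>)
  then have cD: "real (card (D F)) = (\<Sum>k\<in>{1..K}. real (card (I F k))) + real (card T)"
    unfolding cardU by simp
  define c where "c = F div (2*K+2)"
  have "T \<subseteq> {1..c}"
  proof
    fix d assume d: "d \<in> T"
    then have "0 < d" "K + 1 \<le> F div (2*d)" unfolding T_def D_def by auto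
    then have "(K+1) * (2*d) \<le> F" by (simp add: less_eq_div_iff_mult_less_eq)
    then have "d * (2*K+2) \<le> F" by (simp add: algebra_simps)
    then have "d \<le> c" unfolding c_def by (simp add: less_eq_div_iff_mult_less_eq)
    then show "d \<in> {1..c}" using \<open>0 < d\<close> by simp
  qed
  then have "card T \<le> c" by (metis card_atLeastAtMost card_mono diff_Suc_1 finite_atLeastAtMost)
  moreover have "c * (2*K+2) \<le> F" unfolding c_def using div_mult_mod_eq[of F "2*K+2"] by linarith
  ultimately have "real (card T) * (2*K+2) \<le> real F"
    by (metis mult_le_mono1 order_trans of_nat_le_iff of_nat_mult of_nat_add of_nat_numeral of_nat_1 numeral_One)
  then have cT: "real (card T) \<le> real F / (2*real K + 2)" by (simp add: field_simps)
  have T0: "0 \<le> real (card T)" by simp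
  let ?X = "\<Sum>k\<in>{1..K}. real F * (1/(2*real k) - 1/(2*real k+1))"
  have "(\<Sum>k\<in>{1..K}. real (card (I F k))) \<le> (\<Sum>k\<in>{1..K}. real F * (1/(2*real k) - 1/(2*real k+1)) + 1)"
  proof (rule sum_mono)
    fix k assume "k \<in> {1..K}"
    then have "1 \<le> k" by simp
    from card_I[OF this, of F] show "real (card (I F k)) \<le> real F * (1/(2*real k) - 1/(2*real k+1)) + 1" by (simp only: abs_le_iff) linarith
  qed
  then have s1: "(\<Sum>k\<in>{1..K}. real (card (I F k))) \<le> ?X + real K" by (simp add: sum.distrib)
  have "(\<Sum>k\<in>{1..K}. real F * (1/(2*real k) - 1/(2*real k+1)) - 1) \<le> (\<Sum>k\<in>{1..K}. real (card (I F k)))"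
  proof (rule sum_mono)
    fix k assume "k \<in> {1..K}"
    then have "1 \<le> k" by simp
    from card_I[OF this, of F] show "real F * (1/(2*real k) - 1/(2*real k+1)) - 1 \<le> real (card (I F k))" by (simp only: abs_le_iff) linarith
  qed
  then have s2: "?X - real K \<le> (\<Sum>k\<in>{1..K}. real (card (I F k)))" by (simp add: sum_subtractf)
  have X: "?X = real F * (1 - (\<Sum>i<2*K+1. (-1)^i / real (Suc i)))"
    by (simp only: sum_distrib_left[symmetric] csum)
  define S where "S = (\<Sum>i<2*K+1. (-1)^i / real (Suc i))"
  have "S - 1/real (2*K+2) = (\<Sum>i<2*K+2. (-1)^i / real (Suc i))"
    unfolding S_def by (simp add: power_add power_mult)
  then have lnS: "S - 1/(2*real K+2) \<le> ln 2" "ln 2 \<le> S" using ln2_bounds[of K] unfolding S_def[symmetric]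
    by (auto simp: add.commute)
  have F0: "0 \<le> real F" by simp
  have X1: "?X \<le> (1 - ln 2) * real F" unfolding X S_def[symmetric]
    using mult_left_mono[OF lnS(2) F0] by (simp add: algebra_simps)
  have "real F * (S - 1/(2*real K+2)) \<le> real F * ln 2" using mult_left_mono[OF lnS(1) F0] .
  then have X2: "(1 - ln 2) * real F - real F / (2*real K + 2) \<le> ?X" unfolding X S_def[symmetric]
    by (simp add: algebra_simps)
  show ?thesis unfolding cD abs_le_iff using s1 s2 X1 X2 cT T0 by linarith
qed



lemma main_bound:
  assumes F1: "1 \<le> F"
  shows "\<bar>real (nF F) - (1 - ln 2) * real F\<bar> \<le> 4 * sqrt (real F)"
proof -
  define s where "s = sqrt (real F)"
  have s1: "1 \<le> s" unfolding s_def using F1 by simp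
  have ss: "s * s = real F" unfolding s_def by simp
  define K where "K = nat \<lceil>s\<rceil>"
  have K1: "s \<le> real K" "real K \<le> s + 1" unfolding K_def using s1 by linarith+
  then have Kpos: "1 \<le> K" using s1 by linarith
  have b: "\<bar>real (card (D F)) - (1 - ln 2) * real F\<bar> \<le> real K + real F / (2*real K + 2)"
    by (rule D_bound[OF Kpos])
  have "real F / (2*real K + 2) \<le> real F / (2 * s)"
    using K1 s1 by (intro divide_left_mono) auto
  also have "real F / (2 * s) = s / 2" using s1 ss[symmetric] by (simp add: field_simps)
  finally have c: "real F / (2*real K + 2) \<le> s / 2" .
  have "real (nF F) = 1 + real (card (D F))" using nF_eq[OF F1] by simp
  then have "\<bar>real (nF F) - (1 - ln 2) * real F\<bar> \<le> 1 + real K + real F / (2*real K + 2)"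
    using b by linarith
  also have "\<dots> \<le> 4 * s" using K1 c s1 by linarith
  finally show ?thesis unfolding s_def .
qed

theorem mainTheorem20:
  shows "(\<lambda>F. real (nF F) - (1 - ln 2) * real F) \<in> O(\<lambda>F. sqrt (real F))
         \<and> ((\<lambda>F. real (nF F) / real F) \<longlongrightarrow> 1 - ln 2) at_top"
proof
  have ev: "eventually (\<lambda>F::nat. 1 \<le> F) at_top" by (rule eventually_ge_at_top)
  show "(\<lambda>F. real (nF F) - (1 - ln 2) * real F) \<in> O(\<lambda>F. sqrt (real F))"
  proof (rule bigoI[where c = 4])
    show "eventually (\<lambda>F. norm (real (nF F) - (1 - ln 2) * real F) \<le> 4 * norm (sqrt (real F))) at_top"
      using ev by eventually_elim (use main_bound in auto)
  qed
  have lim0: "((\<lambda>F::nat. 4 / sqrt (real F)) \<longlongrightarrow> 0) at_top"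
  proof (rule tendsto_divide_0[OF tendsto_const])
    have "filterlim (\<lambda>F::nat. sqrt (real F)) at_top at_top"
      by (rule filterlim_compose[OF sqrt_at_top filterlim_real_sequentially])
    then show "filterlim (\<lambda>F::nat. sqrt (real F)) at_infinity at_top"
      by (rule filterlim_at_top_imp_at_infinity)
  qed
  have "((\<lambda>F. real (nF F) / real F - (1 - ln 2)) \<longlongrightarrow> 0) at_top"
  proof (rule Lim_null_comparison[OF _ lim0])
    show "eventually (\<lambda>F. norm (real (nF F) / real F - (1 - ln 2)) \<le> 4 / sqrt (real F)) at_top"
      using ev
    proof eventually_elim
      case (elim F)
      have Fp: "0 < real F" using elim by simp
      have "real (nF F) / real F - (1 - ln 2) = (real (nF F) - (1 - ln 2) * real F) / real F"
        using Fp by (simp add: field_simps)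
      then have "norm (real (nF F) / real F - (1 - ln 2)) = \<bar>real (nF F) - (1 - ln 2) * real F\<bar> / real F"
        using Fp by simp
      also have "\<dots> \<le> 4 * sqrt (real F) / real F"
        using main_bound[OF elim] Fp by (simp add: divide_right_mono)
      also have "4 * sqrt (real F) / real F = 4 / sqrt (real F)"
      proof -
        have "sqrt (real F) * sqrt (real F) = real F" by simp
        then show ?thesis using Fp by (simp add: field_simps)
      qed
      finally show ?case .
    qed
  qed
  then show "((\<lambda>F. real (nF F) / real F) \<longlongrightarrow> 1 - ln 2) at_top"
    by (rule LIM_zero_cancel)
qed


end
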